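(* Let $N\ge3$, $\alpha\in\mathbb{C}^N$, and fix $1\le i\ne j\le N$. If $u\in\mathcal{S}(\alpha)$, then $L_{i,j}(\alpha)u\in\mathcal{S}(\alpha+e_i-e_j)$. If moreover $(\alpha_i+1)\alpha_j\neq 0$, the linear map $\mathcal{S}(\alpha)\to\mathcal{S}(\alpha+e_i-e_j)$, $u\mapsto L_{i,j}(\alpha)u$, is an isomorphism whose inverse is $v\mapsto \frac{1}{(\alpha_i+1)\alpha_j}L_{j,i}(\alpha+e_i-e_j)v$.
   Context: $x=(x_1,\dots,x_N)$, $\partial_p=\partial/\partial x_p$, $e_p$ the $p$-th standard unit vector of $\mathbb{C}^N$. For $\beta\in\mathbb{C}^N$ and $p\ne q$: $M_{p,q}(\beta)=\partial_p\partial_q+\frac{\beta_q}{x_p-x_q}\partial_p+\frac{\beta_p}{x_q-x_p}\partial_q$ and $L_{p,q}(\beta)=(x_p-x_q)\partial_q+\beta_q$. Let $\Omega'\subset\{x\in\mathbb{C}^N:x_a\ne x_b\ \forall a\ne b\}$ be a simply connected domain; $\mathcal{S}(\beta)$ is the space of holomorphic $u$ on $\Omega'$ with $M_{p,q}(\beta)u=0$ for all $p\ne q$. *)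

theory Defs
  imports "HOL-Analysis.Analysis"
begin

text \<open>Points of C^N are vectors of type complex^'n, with N = CARD('n).
  The p-th standard unit vector is axis p 1.\<close>

definition holo_on :: "(complex^'n \<Rightarrow> complex) \<Rightarrow> (complex^'n) set \<Rightarrow> bool" where
  "holo_on u \<Omega> \<longleftrightarrow> (\<forall>x\<in>\<Omega>. \<exists>D. (u has_derivative D) (at x) \<and>
                         (\<forall>c v. D (c *s v) = c * D v))"

definition pderiv_p :: "'n \<Rightarrow> (complex^'n \<Rightarrow> complex) \<Rightarrow> complex^'n \<Rightarrow> complex" where
  "pderiv_p p u x = deriv (\<lambda>t. u (x + t *s axis p 1)) 0"

definition Mop :: "'n \<Rightarrow> 'n \<Rightarrow> complex^'n \<Rightarrow> (complex^'n \<Rightarrow> complex) \<Rightarrow> complex^'n \<Rightarrow> complex" where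
  "Mop p q \<beta> u x = pderiv_p p (pderiv_p q u) x
     + (\<beta> $ q) / (x $ p - x $ q) * pderiv_p p u x
     + (\<beta> $ p) / (x $ q - x $ p) * pderiv_p q u x"

definition Lop :: "'n \<Rightarrow> 'n \<Rightarrow> complex^'n \<Rightarrow> (complex^'n \<Rightarrow> complex) \<Rightarrow> complex^'n \<Rightarrow> complex" where
  "Lop p q \<beta> u x = (x $ p - x $ q) * pderiv_p q u x + (\<beta> $ q) * u x"

definition Sol :: "(complex^'n) set \<Rightarrow> complex^'n \<Rightarrow> (complex^'n \<Rightarrow> complex) set" where
  "Sol \<Omega> \<beta> = {u. holo_on u \<Omega> \<and> (\<forall>p q. p \<noteq> q \<longrightarrow> (\<forall>x\<in>\<Omega>. Mop p q \<beta> u x = 0))}"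

end

theory Submission
  imports Defs "HOL-Complex_Analysis.Cauchy_Integral_Formula"
begin


lemma smult_axis: "(t::complex) *s axis p 1 = axis p t"
  by (simp add: vec_eq_iff axis_def)

lemma norm_smult_vec: "norm ((t::complex) *s (v::complex^'n)) = norm t * norm v"
proof -
  have "norm (t *s v) = L2_set (\<lambda>i. norm t * norm (v$i)) UNIV"
    unfolding norm_vec_def by (simp add: norm_mult)
  also have "\<dots> = norm t * norm v"
    unfolding norm_vec_def by (simp add: L2_set_right_distrib)
  finally show ?thesis .
qed

lemma norm_axis_c: "norm (axis p (t::complex) :: complex^'n) = norm t"
proof -
  have "(\<Sum>i\<in>UNIV. (cmod (axis p t $ i))^2) = (\<Sum>i\<in>UNIV. if i = p then (cmod t)^2 else 0)"
    by (rule sum.cong) (auto simp: axis_def)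
  also have "\<dots> = (cmod t)^2" by simp
  finally show ?thesis unfolding norm_vec_def L2_set_def by simp
qed

lemma bl_smult: "bounded_linear (\<lambda>t::complex. t *s (v::complex^'n))"
proof (rule bounded_linear_intro[where K="norm v"])
  fix x y :: complex and r :: real
  show "(x + y) *s v = x *s v + y *s v" by (simp add: vec_eq_iff algebra_simps)
  show "(r *\<^sub>R x) *s v = r *\<^sub>R (x *s v)"
    by (simp add: vec_eq_iff vector_scaleR_component)
  show "norm (x *s v) \<le> norm x * norm v" by (simp add: norm_smult_vec)
qed

lemma holo_D:
  assumes "holo_on u \<Omega>" "x \<in> \<Omega>"
  shows "(u has_derivative (\<lambda>h. \<Sum>q\<in>UNIV. h$q * pderiv_p q u x)) (at x)"
    and "((\<lambda>t. u (x + t *s axis q 1)) has_field_derivative pderiv_p q u x) (at 0)"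
proof -
  obtain D where D: "(u has_derivative D) (at x)" "\<And>c v. D (c *s v) = c * D v"
    using assms unfolding holo_on_def by blast
  have sl: "((\<lambda>t. u (x + t *s axis p 1)) has_field_derivative D (axis p 1)) (at 0)" for p
  proof -
    have l: "((\<lambda>t::complex. x + t *s axis p 1) has_derivative (\<lambda>t. t *s axis p 1)) (at 0)"
      using has_derivative_add[OF has_derivative_const[of x] bounded_linear_imp_has_derivative[OF bl_smult]] by simp
    have "((\<lambda>t. u (x + t *s axis p 1)) has_derivative (\<lambda>t. D (t *s axis p 1))) (at 0)"
      using has_derivative_compose[OF l, of u D] D(1) by simp
    moreover have "(\<lambda>t. D (t *s axis p 1)) = (*) (D (axis p 1))"
      by (auto simp: D(2) mult.commute)
    ultimately show ?thesis unfolding has_field_derivative_def by simp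
  qed
  have pd: "pderiv_p p u x = D (axis p 1)" for p
    unfolding pderiv_p_def using sl[of p] by (rule DERIV_imp_deriv)
  show "((\<lambda>t. u (x + t *s axis q 1)) has_field_derivative pderiv_p q u x) (at 0)"
    using sl pd by simp
  interpret bounded_linear D using D(1) by (rule has_derivative_bounded_linear)
  have "D h = (\<Sum>q\<in>UNIV. h$q * pderiv_p q u x)" for h
  proof -
    have "D h = D (\<Sum>q\<in>UNIV. h$q *s axis q 1)" by (simp add: basis_expansion)
    also have "\<dots> = (\<Sum>q\<in>UNIV. D (h$q *s axis q 1))" by (rule sum)
    also have "\<dots> = (\<Sum>q\<in>UNIV. h$q * pderiv_p q u x)" by (simp add: D(2) pd)
    finally show ?thesis .
  qed
  then have "D = (\<lambda>h. \<Sum>q\<in>UNIV. h$q * pderiv_p q u x)" by auto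
  then show "(u has_derivative (\<lambda>h. \<Sum>q\<in>UNIV. h$q * pderiv_p q u x)) (at x)" using D(1) by simp
qed

lemma holo_slice:
  assumes "holo_on u \<Omega>" "x + t0 *s axis q 1 \<in> \<Omega>"
  shows "((\<lambda>t. u (x + t *s axis q 1)) has_field_derivative pderiv_p q u (x + t0 *s axis q 1)) (at t0)"
proof -
  define z where "z = x + t0 *s axis q 1"
  have f: "((\<lambda>t. u (z + t *s axis q 1)) has_field_derivative pderiv_p q u z) (at ((\<lambda>t. t - t0) t0))"
    using holo_D(2)[OF assms(1)] assms(2) z_def by simp
  have g: "((\<lambda>t. t - t0) has_field_derivative 1) (at t0)"
    by (intro derivative_eq_intros) auto
  have "((\<lambda>t. u (z + (t - t0) *s axis q 1)) has_field_derivative pderiv_p q u z * 1) (at t0)"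
    using DERIV_chain2[OF f g] by simp
  moreover have "z + (t - t0) *s axis q 1 = x + t *s axis q 1" for t
    by (simp add: z_def vec_eq_iff algebra_simps)
  ultimately show ?thesis by (simp add: z_def)
qed

lemma slice_holomorphic:
  assumes "holo_on u \<Omega>"
  shows "(\<lambda>w. u (y + w *s axis q 1)) holomorphic_on {w. y + w *s axis q 1 \<in> \<Omega>}"
  unfolding holomorphic_on_def
proof
  fix w assume "w \<in> {w. y + w *s axis q 1 \<in> \<Omega>}"
  then have "((\<lambda>t. u (y + t *s axis q 1)) has_field_derivative pderiv_p q u (y + w *s axis q 1)) (at w)"
    using holo_slice[OF assms] by simp
  then show "(\<lambda>w. u (y + w *s axis q 1)) field_differentiable at w within {w. y + w *s axis q 1 \<in> \<Omega>}"
    using field_differentiable_at_within field_differentiable_def by blast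
qed

lemma holo_cont: "holo_on u \<Omega> \<Longrightarrow> continuous_on \<Omega> u"
  unfolding holo_on_def
  by (meson continuous_at_imp_continuous_on has_derivative_continuous)

lemma norm_sax: "norm (w *s axis q (1::complex) :: complex^'n) = norm w"
  by (simp add: smult_axis norm_axis_c)

lemma open_slice_set:
  assumes "open \<Omega>" shows "open {w. y + w *s axis q (1::complex) \<in> (\<Omega>::(complex^'n) set)}"
proof -
  have "continuous_on UNIV (\<lambda>w::complex. y + w *s axis q (1::complex))"
    using bounded_linear.continuous_on[OF bl_smult continuous_on_id]
    by (intro continuous_intros) auto
  then show ?thesis using open_vimage[OF assms] by (simp add: vimage_def)
qed

lemma cauchy_rep:
  assumes "open \<Omega>" "holo_on u \<Omega>" "ball x (2*\<delta>) \<subseteq> \<Omega>" "0 < \<delta>" "y \<in> ball x \<delta>"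
  shows "((\<lambda>w. u (y + w *s axis q 1) / w^2) has_contour_integral (2*pi*\<i> * pderiv_p q u y)) (circlepath 0 \<delta>)"
proof -
  define g where "g = (\<lambda>w. u (y + w *s axis q 1))"
  define S where "S = {w. y + w *s axis q 1 \<in> \<Omega>}"
  have hS: "g holomorphic_on S" unfolding g_def S_def by (rule slice_holomorphic[OF assms(2)])
  have sub: "cball 0 \<delta> \<subseteq> S"
  proof
    fix w :: complex assume "w \<in> cball 0 \<delta>"
    then have "norm w \<le> \<delta>" by simp
    moreover have "dist x (y + w *s axis q 1) \<le> dist x y + norm (w *s axis q 1)"
    proof -
      have "dist x (y + w *s axis q 1) = norm ((x - y) - w *s axis q 1)" by (simp add: dist_norm algebra_simps)
      also have "\<dots> \<le> norm (x - y) + norm (w *s axis q 1)" by (rule norm_triangle_ineq4)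
      finally show ?thesis by (simp add: dist_norm)
    qed
    ultimately have "dist x (y + w *s axis q 1) < 2 * \<delta>" using assms(5) by (simp add: norm_sax)
    then show "w \<in> S" using assms(3) S_def by auto
  qed
  have "((\<lambda>w. g w / (w - 0) ^ Suc 1) has_contour_integral ((2 * pi * \<i>) / (fact 1) * (deriv ^^ 1) g 0))
           (circlepath 0 \<delta>)"
  proof (rule Cauchy_has_contour_integral_higher_derivative_circlepath)
    show "continuous_on (cball 0 \<delta>) g"
      using holomorphic_on_imp_continuous_on[OF holomorphic_on_subset[OF hS sub]] .
    show "g holomorphic_on ball 0 \<delta>"
      using holomorphic_on_subset[OF hS] sub ball_subset_cball by blast
  qed (use assms(4) in auto)
  then show ?thesis by (simp add: g_def pderiv_p_def power2_eq_square)
qed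

lemma dist_sax: "dist x (y + w *s axis q (1::complex)) \<le> dist x y + norm w"
proof -
  have "dist x (y + w *s axis q 1) = norm ((x - y) - w *s axis q 1)" by (simp add: dist_norm algebra_simps)
  also have "\<dots> \<le> norm (x - y) + norm (w *s axis q 1)" by (rule norm_triangle_ineq4)
  finally show ?thesis by (simp add: dist_norm norm_sax)
qed

lemma pderiv_cont:
  assumes "open \<Omega>" "holo_on u \<Omega>"
  shows "continuous_on \<Omega> (pderiv_p q u)"
proof (rule continuous_at_imp_continuous_on, rule ballI)
  fix x assume "x \<in> \<Omega>"
  then obtain r where r: "r > 0" "ball x r \<subseteq> \<Omega>" using assms(1) open_contains_ball by blast
  define \<delta> where "\<delta> = r/3"
  have d0: "\<delta> > 0" using r by (simp add: \<delta>_def)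
  have K: "cball x (2*\<delta>) \<subseteq> \<Omega>" using r by (auto simp: \<delta>_def)
  have B: "ball x (2*\<delta>) \<subseteq> \<Omega>" using K ball_subset_cball by blast
  have uc: "uniformly_continuous_on (cball x (2*\<delta>)) u"
    by (rule compact_uniformly_continuous) (use continuous_on_subset[OF holo_cont[OF assms(2)] K] in auto)
  show "continuous (at x) (pderiv_p q u)"
    unfolding continuous_at_eps_delta
  proof (intro allI impI)
    fix e :: real assume e: "e > 0"
    define \<epsilon> where "\<epsilon> = e * \<delta> / 2"
    have "\<epsilon> > 0" using e d0 by (simp add: \<epsilon>_def)
    then obtain \<eta> where eta: "\<eta> > 0" "\<And>a b. a \<in> cball x (2*\<delta>) \<Longrightarrow> b \<in> cball x (2*\<delta>) \<Longrightarrow> dist b a < \<eta> \<Longrightarrow> dist (u b) (u a) < \<epsilon>"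
      using uc unfolding uniformly_continuous_on_def by metis
    show "\<exists>d>0. \<forall>y. dist y x < d \<longrightarrow> dist (pderiv_p q u y) (pderiv_p q u x) < e"
    proof (intro exI[of _ "min \<eta> \<delta>"] conjI allI impI)
      show "min \<eta> \<delta> > 0" using eta d0 by simp
      fix y assume y: "dist y x < min \<eta> \<delta>"
      have yb: "y \<in> ball x \<delta>" using y by (simp add: dist_commute)
      have xb: "x \<in> ball x \<delta>" using d0 by simp
      have "((\<lambda>w. u (y + w *s axis q 1) / w^2 - u (x + w *s axis q 1) / w^2) has_contour_integral
          (2*pi*\<i> * pderiv_p q u y - 2*pi*\<i> * pderiv_p q u x)) (circlepath 0 \<delta>)"
        by (intro has_contour_integral_diff cauchy_rep[OF assms B d0] yb xb)
      then have "norm (2*pi*\<i> * pderiv_p q u y - 2*pi*\<i> * pderiv_p q u x) \<le> (\<epsilon> / \<delta>^2) * (2*pi*\<delta>)"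
      proof (rule has_contour_integral_bound_circlepath)
        show "0 \<le> \<epsilon> / \<delta>^2" using \<open>\<epsilon> > 0\<close> by simp
        show "0 < \<delta>" by (rule d0)
        fix w :: complex assume w: "norm (w - 0) = \<delta>"
        have a: "x + w *s axis q 1 \<in> cball x (2*\<delta>)"
          using dist_sax[of x x w q] w d0 by simp
        have b: "y + w *s axis q 1 \<in> cball x (2*\<delta>)"
          using dist_sax[of x y w q] w y by (simp add: dist_commute)
        have "dist (u (y + w *s axis q 1)) (u (x + w *s axis q 1)) < \<epsilon>"
          using eta(2)[OF a b] y by (simp add: dist_norm)
        then have "norm (u (y + w *s axis q 1) - u (x + w *s axis q 1)) \<le> \<epsilon>" by (simp add: dist_norm)
        moreover have "u (y + w *s axis q 1) / w^2 - u (x + w *s axis q 1) / w^2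
            = (u (y + w *s axis q 1) - u (x + w *s axis q 1)) / w^2" by (simp add: diff_divide_distrib)
        ultimately show "norm (u (y + w *s axis q 1) / w^2 - u (x + w *s axis q 1) / w^2) \<le> \<epsilon> / \<delta>^2"
          using w by (simp add: norm_divide norm_power divide_right_mono)
      qed
      also have "\<dots> = pi * e" using d0 by (simp add: \<epsilon>_def power2_eq_square field_simps)
      finally have "2 * pi * norm (pderiv_p q u y - pderiv_p q u x) \<le> pi * e"
        by (simp add: right_diff_distrib[symmetric] norm_mult)
      then have "norm (pderiv_p q u y - pderiv_p q u x) \<le> e/2" by (simp add: field_simps)
      then show "dist (pderiv_p q u y) (pderiv_p q u x) < e" using e by (simp add: dist_norm)
    qed
  qed
qed

lemma onorm_sum_bound:
  fixes c :: "'n::finite \<Rightarrow> complex"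
  shows "onorm (\<lambda>k::complex^'n. \<Sum>p\<in>UNIV. k$p * c p) \<le> (\<Sum>p\<in>UNIV. norm (c p))"
proof (rule onorm_le)
  fix k :: "complex^'n"
  have "norm (\<Sum>p\<in>UNIV. k$p * c p) \<le> (\<Sum>p\<in>UNIV. norm (k$p * c p))" by (rule norm_sum)
  also have "\<dots> \<le> (\<Sum>p\<in>UNIV. norm k * norm (c p))"
    unfolding norm_mult by (intro sum_mono mult_right_mono Finite_Cartesian_Product.norm_nth_le norm_ge_zero)
  also have "\<dots> = (\<Sum>p\<in>UNIV. norm (c p)) * norm k" by (simp add: sum_distrib_left mult.commute)
  finally show "norm (\<Sum>p\<in>UNIV. k$p * c p) \<le> (\<Sum>p\<in>UNIV. norm (c p)) * norm k" .
qed

lemma bl_lin: "bounded_linear (\<lambda>h::complex^'n. \<Sum>p\<in>UNIV. h$p * c p)"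
  by (intro bounded_linear_sum bounded_linear_compose[OF bounded_linear_mult_left bounded_linear_vec_nth])

lemma pderiv_has_deriv:
  fixes u :: "complex^'n \<Rightarrow> complex"
  assumes "open \<Omega>" "holo_on u \<Omega>" "x \<in> \<Omega>" "ball x r \<subseteq> \<Omega>" "r > 0"
  shows "(pderiv_p q u has_derivative (\<lambda>h. \<Sum>p\<in>UNIV. h$p *
      (contour_integral (circlepath 0 (r/3)) (\<lambda>w. pderiv_p p u (x + w *s axis q 1) / w^2) / (2*pi*\<i>)))) (at x)"
proof -
  define \<delta> where "\<delta> = r/3"
  have d0: "\<delta> > 0" using assms by (simp add: \<delta>_def)
  have K: "cball x (2*\<delta>) \<subseteq> \<Omega>" using assms by (auto simp: \<delta>_def)
  have B: "ball x (2*\<delta>) \<subseteq> \<Omega>" using K ball_subset_cball by blast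
  define c where "c p = contour_integral (circlepath 0 \<delta>) (\<lambda>w. pderiv_p p u (x + w *s axis q 1) / w^2)" for p
  have sph: "x + w *s axis q 1 \<in> cball x (2*\<delta>)" if "norm w = \<delta>" for w
    using dist_sax[of x x w q] that d0 by simp
  have cI: "((\<lambda>w. pderiv_p p u (x + w *s axis q 1) / w^2) has_contour_integral c p) (circlepath 0 \<delta>)" for p
  proof -
    have "continuous_on (sphere 0 \<delta>) (\<lambda>w. pderiv_p p u (x + w *s axis q 1) / w^2)"
    proof (intro continuous_intros)
      have "continuous_on (sphere 0 \<delta>) (\<lambda>w::complex. x + w *s axis q 1)"
        using bounded_linear.continuous_on[OF bl_smult continuous_on_id]
        by (intro continuous_intros) auto
      moreover have "(\<lambda>w::complex. x + w *s axis q 1) ` sphere 0 \<delta> \<subseteq> \<Omega>" using sph K by auto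
      ultimately show "continuous_on (sphere 0 \<delta>) (\<lambda>w. pderiv_p p u (x + w *s axis q 1))"
        using continuous_on_compose2[OF pderiv_cont[OF assms(1,2)]] by blast
    qed (use d0 in auto)
    then show ?thesis unfolding c_def
      by (intro has_contour_integral_integral contour_integrable_continuous_circlepath) (use d0 in simp)
  qed
  define G where "G s = (\<chi> p. pderiv_p p u s)" for s
  have ucG: "uniformly_continuous_on (cball x (2*\<delta>)) G"
    unfolding G_def
    by (rule compact_uniformly_continuous)
       (use continuous_on_subset[OF pderiv_cont[OF assms(1,2)] K] in \<open>auto intro!: continuous_on_vec_lambda\<close>)
  define L where "L h = (\<Sum>p\<in>UNIV. h$p * (c p / (2*pi*\<i>)))" for h :: "complex^'n"
  have "(pderiv_p q u has_derivative L) (at x)"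
    unfolding has_derivative_at_alt
  proof (intro conjI allI impI)
    show "bounded_linear L" unfolding L_def by (rule bl_lin)
    fix e :: real assume e: "e > 0"
    define \<epsilon> where "\<epsilon> = e * \<delta>"
    have ep: "\<epsilon> > 0" using e d0 by (simp add: \<epsilon>_def)
    have "\<epsilon> / real CARD('n) > 0" using ep by simp
    then obtain \<eta> where eta: "\<eta> > 0" "\<And>a b. a \<in> cball x (2*\<delta>) \<Longrightarrow> b \<in> cball x (2*\<delta>) \<Longrightarrow> dist b a < \<eta> \<Longrightarrow> dist (G b) (G a) < \<epsilon> / real CARD('n)"
      using ucG unfolding uniformly_continuous_on_def by metis
    show "\<exists>d>0. \<forall>y. norm (y - x) < d \<longrightarrow> norm (pderiv_p q u y - pderiv_p q u x - L (y - x)) \<le> e * norm (y - x)"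
    proof (intro exI[of _ "min \<eta> \<delta>"] conjI allI impI)
      show "min \<eta> \<delta> > 0" using eta d0 by simp
      fix y assume y: "norm (y - x) < min \<eta> \<delta>"
      define h where "h = y - x"
      have yb: "y \<in> ball x \<delta>" using y by (simp add: dist_norm norm_minus_commute)
      have xb: "x \<in> ball x \<delta>" using d0 by simp
      have I: "((\<lambda>w. u (y + w *s axis q 1) / w^2 - u (x + w *s axis q 1) / w^2
                 - (\<Sum>p\<in>UNIV. h$p * (pderiv_p p u (x + w *s axis q 1) / w^2))) has_contour_integral
          (2*pi*\<i> * pderiv_p q u y - 2*pi*\<i> * pderiv_p q u x - (\<Sum>p\<in>UNIV. h$p * c p))) (circlepath 0 \<delta>)"
        by (intro has_contour_integral_diff cauchy_rep[OF assms(1,2) B d0] yb xb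
              has_contour_integral_sum has_contour_integral_lmul cI) auto
      have "norm (2*pi*\<i> * pderiv_p q u y - 2*pi*\<i> * pderiv_p q u x - (\<Sum>p\<in>UNIV. h$p * c p))
          \<le> (norm h * \<epsilon> / \<delta>^2) * (2*pi*\<delta>)"
        using I
      proof (rule has_contour_integral_bound_circlepath)
        show "0 \<le> norm h * \<epsilon> / \<delta>^2" using ep by simp
        show "0 < \<delta>" by (rule d0)
        fix w :: complex assume w: "norm (w - 0) = \<delta>"
        define z where "z = x + w *s axis q 1"
        have zK: "z \<in> cball x (2*\<delta>)" using sph w z_def by simp
        have yz: "y + w *s axis q 1 = z + h" by (simp add: z_def h_def algebra_simps)
        define S where "S = closed_segment z (z + h)"
        have SK: "s \<in> cball x (2*\<delta>)" "dist s z \<le> norm h" if "s \<in> S" for s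
        proof -
          obtain t where t: "0 \<le> t" "t \<le> 1" "s = z + t *\<^sub>R h"
            using \<open>s \<in> S\<close> unfolding S_def closed_segment_def by (auto simp: algebra_simps)
          have "dist s z = t * norm h" using t by (simp add: dist_norm)
          also have "\<dots> \<le> norm h" using t by (simp add: mult_left_le_one_le)
          finally show "dist s z \<le> norm h" .
          have "s - x = w *s axis q 1 + t *\<^sub>R h" by (simp add: t z_def)
          then have "dist x s = norm (w *s axis q 1 + t *\<^sub>R h)" by (simp add: dist_norm norm_minus_commute)
          also have "\<dots> \<le> norm (w *s axis q 1) + norm (t *\<^sub>R h)"
            by (rule norm_triangle_ineq)
          also have "\<dots> \<le> \<delta> + norm h" using t w by (simp add: norm_sax mult_left_le_one_le)
          also have "\<dots> \<le> 2*\<delta>" using y h_def by simp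
          finally show "s \<in> cball x (2*\<delta>)" by simp
        qed
        have bnd: "norm (u (z + h) - u z - (\<Sum>p\<in>UNIV. h$p * pderiv_p p u z)) \<le> norm h * \<epsilon>"
        proof -
          have a: "z + t *\<^sub>R (z + h - z) \<in> S" if "t \<in> {0..1}" for t
            using that unfolding S_def closed_segment_def by (auto simp: algebra_simps)
          have b: "(u has_derivative (\<lambda>k. \<Sum>p\<in>UNIV. k$p * pderiv_p p u s)) (at s within S)" if "s \<in> S" for s
            using holo_D(1)[OF assms(2)] SK(1)[OF that] K has_derivative_at_withinI by blast
          have c: "onorm ((\<lambda>k. \<Sum>p\<in>UNIV. k$p * pderiv_p p u s) - (\<lambda>k. \<Sum>p\<in>UNIV. k$p * pderiv_p p u z)) \<le> \<epsilon>"
            if "s \<in> S" for s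
          proof -
            have eq: "((\<lambda>k. \<Sum>p\<in>UNIV. k$p * pderiv_p p u s) - (\<lambda>k. \<Sum>p\<in>UNIV. k$p * pderiv_p p u z))
                = (\<lambda>k::complex^'n. \<Sum>p\<in>UNIV. k$p * (pderiv_p p u s - pderiv_p p u z))"
              by (auto simp: fun_diff_def sum_subtractf[symmetric] algebra_simps)
            have "dist (G s) (G z) < \<epsilon> / real CARD('n)"
              using eta(2)[OF zK SK(1)[OF that]] SK(2)[OF that] y h_def by simp
            then have "norm (pderiv_p p u s - pderiv_p p u z) \<le> \<epsilon> / real CARD('n)" for p
              using Finite_Cartesian_Product.norm_nth_le[of "G s - G z" p] by (simp add: G_def dist_norm)
            then have "(\<Sum>p\<in>UNIV. norm (pderiv_p p u s - pderiv_p p u z)) \<le> (\<Sum>p\<in>(UNIV::'n set). \<epsilon> / real CARD('n))"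
              by (intro sum_mono) auto
            also have "\<dots> = \<epsilon>" by simp
            finally show ?thesis unfolding eq by (rule order_trans[OF onorm_sum_bound])
          qed
          have "z \<in> S" unfolding S_def by simp
          from differentiable_bound_linearization[OF a b c this] show ?thesis by simp
        qed
        have "u (y + w *s axis q 1) / w^2 - u (x + w *s axis q 1) / w^2
                 - (\<Sum>p\<in>UNIV. h$p * (pderiv_p p u (x + w *s axis q 1) / w^2))
             = (u (z + h) - u z - (\<Sum>p\<in>UNIV. h$p * pderiv_p p u z)) / w^2"
          by (simp add: yz z_def diff_divide_distrib sum_divide_distrib)
        then show "norm (u (y + w *s axis q 1) / w^2 - u (x + w *s axis q 1) / w^2
                 - (\<Sum>p\<in>UNIV. h$p * (pderiv_p p u (x + w *s axis q 1) / w^2))) \<le> norm h * \<epsilon> / \<delta>^2"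
          using bnd w by (simp add: norm_divide norm_power divide_right_mono)
      qed
      also have "\<dots> = 2 * pi * (e * norm h)" using d0 by (simp add: \<epsilon>_def power2_eq_square field_simps)
      finally have *: "norm (2*pi*\<i> * (pderiv_p q u y - pderiv_p q u x - L h)) \<le> 2 * pi * (e * norm h)"
        by (simp add: L_def right_diff_distrib sum_distrib_left algebra_simps)
      have "norm (2*pi*\<i> * (pderiv_p q u y - pderiv_p q u x - L h)) = 2 * pi * norm (pderiv_p q u y - pderiv_p q u x - L h)"
        by (simp add: norm_mult)
      with * show "norm (pderiv_p q u y - pderiv_p q u x - L (y - x)) \<le> e * norm (y - x)"
        by (simp add: h_def)
    qed
  qed
  then show ?thesis unfolding L_def c_def \<delta>_def .
qed

lemma sum_axis: "(\<Sum>p'\<in>UNIV. (axis p (1::complex) :: complex^'n) $ p' * f p') = f p"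
proof -
  have "(\<Sum>p'\<in>UNIV. (axis p (1::complex) :: complex^'n) $ p' * f p') = (\<Sum>p'\<in>UNIV. if p' = p then f p else 0)"
    by (rule sum.cong) (auto simp: axis_def)
  then show ?thesis by simp
qed

lemma pderiv_holo:
  fixes u :: "complex^'n \<Rightarrow> complex"
  assumes "open \<Omega>" "holo_on u \<Omega>"
  shows "holo_on (pderiv_p q u) \<Omega>"
  unfolding holo_on_def
proof
  fix x assume x: "x \<in> \<Omega>"
  then obtain r where r: "r > 0" "ball x r \<subseteq> \<Omega>" using assms(1) open_contains_ball by blast
  define C where "C p = contour_integral (circlepath 0 (r/3)) (\<lambda>w. pderiv_p p u (x + w *s axis q 1) / w^2) / (2*pi*\<i>)" for p
  have "(pderiv_p q u has_derivative (\<lambda>h. \<Sum>p\<in>UNIV. h$p * C p)) (at x)"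
    unfolding C_def by (rule pderiv_has_deriv[OF assms x r(2) r(1)])
  moreover have "(\<Sum>p\<in>UNIV. (c *s v)$p * C p) = c * (\<Sum>p\<in>UNIV. v$p * C p)" for c v
    by (simp add: sum_distrib_left mult.assoc)
  ultimately show "\<exists>D. (pderiv_p q u has_derivative D) (at x) \<and> (\<forall>c v. D (c *s v) = c * D v)"
    by blast
qed

lemma pderiv_sym:
  fixes u :: "complex^'n \<Rightarrow> complex"
  assumes "open \<Omega>" "holo_on u \<Omega>" "x \<in> \<Omega>"
  shows "pderiv_p p (pderiv_p q u) x = pderiv_p q (pderiv_p p u) x"
proof -
  obtain r where r: "r > 0" "ball x r \<subseteq> \<Omega>" using assms(1,3) open_contains_ball by blast
  define C where "C p = contour_integral (circlepath 0 (r/3)) (\<lambda>w. pderiv_p p u (x + w *s axis q 1) / w^2) / (2*pi*\<i>)" for p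
  have "(pderiv_p q u has_derivative (\<lambda>h. \<Sum>p\<in>UNIV. h$p * C p)) (at x)"
    unfolding C_def by (rule pderiv_has_deriv[OF assms r(2) r(1)])
  moreover have "(pderiv_p q u has_derivative (\<lambda>h. \<Sum>p\<in>UNIV. h$p * pderiv_p p (pderiv_p q u) x)) (at x)"
    by (rule holo_D(1)[OF pderiv_holo[OF assms(1,2)] assms(3)])
  ultimately have "(\<lambda>h. \<Sum>p\<in>UNIV. h$p * C p) = (\<lambda>h. \<Sum>p\<in>UNIV. h$p * pderiv_p p (pderiv_p q u) x)"
    by (rule has_derivative_unique)
  then have "(\<Sum>p'\<in>UNIV. (axis p 1 :: complex^'n)$p' * C p') = (\<Sum>p'\<in>UNIV. (axis p 1 :: complex^'n)$p' * pderiv_p p' (pderiv_p q u) x)"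
    by metis
  then have e1: "pderiv_p p (pderiv_p q u) x = C p" by (simp add: sum_axis)
  have "ball x (2*(r/3)) \<subseteq> \<Omega>" using r by auto
  from cauchy_rep[OF assms(1) pderiv_holo[where q=p, OF assms(1,2)] this _ _, of x q] r
  have "((\<lambda>w. pderiv_p p u (x + w *s axis q 1) / w^2) has_contour_integral (2*pi*\<i> * pderiv_p q (pderiv_p p u) x)) (circlepath 0 (r/3))"
    by simp
  then have "contour_integral (circlepath 0 (r/3)) (\<lambda>w. pderiv_p p u (x + w *s axis q 1) / w^2) = 2*pi*\<i> * pderiv_p q (pderiv_p p u) x"
    by (rule contour_integral_unique)
  then show ?thesis using e1 by (simp add: C_def)
qed



lemma smult_zero_vec[simp]: "(0::complex) *s v = 0"
  by (simp add: vec_eq_iff)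

lemma slice_coord: "((\<lambda>t. (y + t *s axis p (1::complex)) $ a) has_field_derivative (if a = p then 1 else 0)) (at t0)"
proof -
  have "(\<lambda>t. (y + t *s axis p (1::complex)) $ a) = (\<lambda>t. y$a + t * (if a = p then 1 else 0))"
    by (auto simp: axis_def)
  then show ?thesis by (auto intro!: derivative_eq_intros)
qed

lemma pd_local:
  assumes "open \<Omega>" "x \<in> \<Omega>" "\<And>y. y \<in> \<Omega> \<Longrightarrow> f y = g y"
  shows "pderiv_p p f x = pderiv_p p g x"
  unfolding pderiv_p_def
proof (rule deriv_cong_ev)
  have "open {t. x + t *s axis p 1 \<in> \<Omega>}" by (rule open_slice_set[OF assms(1)])
  moreover have "0 \<in> {t. x + t *s axis p 1 \<in> \<Omega>}" using assms(2) by simp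
  ultimately have "eventually (\<lambda>t. t \<in> {t. x + t *s axis p 1 \<in> \<Omega>}) (nhds 0)"
    by (rule eventually_nhds_in_open)
  then show "\<forall>\<^sub>F t in nhds 0. f (x + t *s axis p 1) = g (x + t *s axis p 1)"
    by eventually_elim (use assms(3) in auto)
qed simp

lemma pd_eq: "((\<lambda>t. f (x + t *s axis p 1)) has_field_derivative d) (at 0) \<Longrightarrow> pderiv_p p f x = d"
  unfolding pderiv_p_def by (rule DERIV_imp_deriv)

lemma pd_Lop:
  assumes "holo_on u \<Omega>" "open \<Omega>" "x \<in> \<Omega>"
  shows "pderiv_p q (Lop i j \<beta> u) x =
     ((if i = q then 1 else 0) - (if j = q then 1 else 0)) * pderiv_p j u x
     + (x$i - x$j) * pderiv_p q (pderiv_p j u) x + \<beta>$j * pderiv_p q u x"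
proof (rule pd_eq)
  note s1 = holo_D(2)[OF assms(1,3), of q]
  note s2 = holo_D(2)[OF pderiv_holo[where q=j, OF assms(2,1)] assms(3), where q=q]
  show "((\<lambda>t. Lop i j \<beta> u (x + t *s axis q 1)) has_field_derivative
     ((if i = q then 1 else 0) - (if j = q then 1 else 0)) * pderiv_p j u x
     + (x$i - x$j) * pderiv_p q (pderiv_p j u) x + \<beta>$j * pderiv_p q u x) (at 0)"
    unfolding Lop_def
    by (rule derivative_eq_intros slice_coord s1 s2 refl)+ simp
qed

lemma pd_DqLop:
  assumes "holo_on u \<Omega>" "open \<Omega>" "x \<in> \<Omega>"
  shows "pderiv_p p (pderiv_p q (Lop i j \<beta> u)) x =
     ((if i = q then 1 else 0) - (if j = q then 1 else 0)) * pderiv_p p (pderiv_p j u) x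
     + ((if i = p then 1 else 0) - (if j = p then 1 else 0)) * pderiv_p q (pderiv_p j u) x
     + (x$i - x$j) * pderiv_p p (pderiv_p q (pderiv_p j u)) x + \<beta>$j * pderiv_p p (pderiv_p q u) x"
proof -
  have "pderiv_p p (pderiv_p q (Lop i j \<beta> u)) x = pderiv_p p (\<lambda>y.
     ((if i = q then 1 else 0) - (if j = q then 1 else 0)) * pderiv_p j u y
     + (y$i - y$j) * pderiv_p q (pderiv_p j u) y + \<beta>$j * pderiv_p q u y) x"
    by (rule pd_local[OF assms(2,3)]) (rule pd_Lop[OF assms(1,2)])
  also have "\<dots> = ((if i = q then 1 else 0) - (if j = q then 1 else 0)) * pderiv_p p (pderiv_p j u) x
     + ((if i = p then 1 else 0) - (if j = p then 1 else 0)) * pderiv_p q (pderiv_p j u) x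
     + (x$i - x$j) * pderiv_p p (pderiv_p q (pderiv_p j u)) x + \<beta>$j * pderiv_p p (pderiv_p q u) x"
  proof (rule pd_eq)
    have h1: "holo_on (pderiv_p j u) \<Omega>" by (rule pderiv_holo[OF assms(2,1)])
    have h2: "holo_on (pderiv_p q (pderiv_p j u)) \<Omega>" by (rule pderiv_holo[OF assms(2) h1])
    have h3: "holo_on (pderiv_p q u) \<Omega>" by (rule pderiv_holo[OF assms(2,1)])
    note s1 = holo_D(2)[OF h1 assms(3), where q=p]
    note s2 = holo_D(2)[OF h2 assms(3), where q=p]
    note s3 = holo_D(2)[OF h3 assms(3), where q=p]
    show "((\<lambda>t. ((if i = q then 1 else 0) - (if j = q then 1 else 0)) * pderiv_p j u (x + t *s axis p 1)
     + ((x + t *s axis p 1)$i - (x + t *s axis p 1)$j) * pderiv_p q (pderiv_p j u) (x + t *s axis p 1)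
     + \<beta>$j * pderiv_p q u (x + t *s axis p 1)) has_field_derivative
       ((if i = q then 1 else 0) - (if j = q then 1 else 0)) * pderiv_p p (pderiv_p j u) x
     + ((if i = p then 1 else 0) - (if j = p then 1 else 0)) * pderiv_p q (pderiv_p j u) x
     + (x$i - x$j) * pderiv_p p (pderiv_p q (pderiv_p j u)) x + \<beta>$j * pderiv_p p (pderiv_p q u) x) (at 0)"
      by (rule derivative_eq_intros slice_coord s1 s2 s3 refl)+ (simp add: algebra_simps)
  qed
  finally show ?thesis .
qed

definition Rf :: "complex^'n \<Rightarrow> (complex^'n \<Rightarrow> complex) \<Rightarrow> 'n \<Rightarrow> 'n \<Rightarrow> complex^'n \<Rightarrow> complex" where
  "Rf \<beta> u a b y = - (\<beta>$b / (y$a - y$b)) * pderiv_p a u y - (\<beta>$a / (y$b - y$a)) * pderiv_p b u y"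

lemma Sol_rel:
  assumes "u \<in> Sol \<Omega> \<beta>" "a \<noteq> b" "y \<in> \<Omega>"
  shows "pderiv_p a (pderiv_p b u) y = Rf \<beta> u a b y"
proof -
  have h: "Mop a b \<beta> u y = 0" using assms unfolding Sol_def by blast
  have "pderiv_p a (pderiv_p b u) y = Mop a b \<beta> u y - (\<beta>$b / (y$a - y$b)) * pderiv_p a u y
          - (\<beta>$a / (y$b - y$a)) * pderiv_p b u y"
    unfolding Mop_def by simp
  then show ?thesis using h unfolding Rf_def by simp
qed

lemma alg1: "- ((0 * d1 - Bb * e1) / (d1 * d1)) * A + S * - (Bb / d1) -
   ((0 * d2 - Ba * e2) / (d2 * d2) * C + T * (Ba / d2)) =
   - (Bb / d1) * S + Bb * e1 / d1^2 * A - Ba / d2 * T + Ba * e2 / d2^2 * (C::complex)"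
  by (simp add: algebra_simps power2_eq_square)

lemma pd_R:
  assumes "holo_on u \<Omega>" "open \<Omega>" "x \<in> \<Omega>" "x$a \<noteq> x$b"
  shows "pderiv_p c (Rf \<beta> u a b) x =
     - (\<beta>$b / (x$a - x$b)) * pderiv_p c (pderiv_p a u) x
     + \<beta>$b * ((if a = c then 1 else 0) - (if b = c then 1 else 0)) / (x$a - x$b)^2 * pderiv_p a u x
     - (\<beta>$a / (x$b - x$a)) * pderiv_p c (pderiv_p b u) x
     + \<beta>$a * ((if b = c then 1 else 0) - (if a = c then 1 else 0)) / (x$b - x$a)^2 * pderiv_p b u x"
proof (rule pd_eq)
  have h1: "holo_on (pderiv_p a u) \<Omega>" by (rule pderiv_holo[OF assms(2,1)])
  have h2: "holo_on (pderiv_p b u) \<Omega>" by (rule pderiv_holo[OF assms(2,1)])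
  note s1 = holo_D(2)[OF h1 assms(3), where q=c]
  note s2 = holo_D(2)[OF h2 assms(3), where q=c]
  have n1: "x$a - x$b \<noteq> 0" "x$b - x$a \<noteq> 0" "x$b \<noteq> x$a" using assms(4) by auto
  have d1: "((\<lambda>t. (x + t *s axis c 1)$a - (x + t *s axis c 1)$b) has_field_derivative
      ((if a = c then 1 else 0) - (if b = c then 1 else 0))) (at 0)"
    by (rule DERIV_diff[OF slice_coord slice_coord])
  have d2: "((\<lambda>t. (x + t *s axis c 1)$b - (x + t *s axis c 1)$a) has_field_derivative
      ((if b = c then 1 else 0) - (if a = c then 1 else 0))) (at 0)"
    by (rule DERIV_diff[OF slice_coord slice_coord])
  have z1: "(x + 0 *s axis c 1)$a - (x + 0 *s axis c 1)$b \<noteq> 0" using n1 by simp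
  have z2: "(x + 0 *s axis c 1)$b - (x + 0 *s axis c 1)$a \<noteq> 0" using n1 by simp
  note F1 = DERIV_mult[OF DERIV_minus[OF DERIV_divide[OF DERIV_const[of "\<beta>$b"] d1 z1]] s1]
  note F2 = DERIV_mult[OF DERIV_divide[OF DERIV_const[of "\<beta>$a"] d2 z2] s2]
  note F = DERIV_diff[OF F1 F2]
  have eqX: "- ((0 * ((x + 0 *s axis c 1) $ a - (x + 0 *s axis c 1) $ b) -
     \<beta> $ b * ((if a = c then 1 else 0) - (if b = c then 1 else 0))) /
    (((x + 0 *s axis c 1) $ a - (x + 0 *s axis c 1) $ b) *
     ((x + 0 *s axis c 1) $ a - (x + 0 *s axis c 1) $ b))) *
 pderiv_p a u (x + 0 *s axis c 1) +
 pderiv_p c (pderiv_p a u) x *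
 - (\<beta> $ b / ((x + 0 *s axis c 1) $ a - (x + 0 *s axis c 1) $ b)) -
 ((0 * ((x + 0 *s axis c 1) $ b - (x + 0 *s axis c 1) $ a) -
   \<beta> $ a * ((if b = c then 1 else 0) - (if a = c then 1 else 0))) /
  (((x + 0 *s axis c 1) $ b - (x + 0 *s axis c 1) $ a) *
   ((x + 0 *s axis c 1) $ b - (x + 0 *s axis c 1) $ a)) *
  pderiv_p b u (x + 0 *s axis c 1) +
  pderiv_p c (pderiv_p b u) x *
  (\<beta> $ a / ((x + 0 *s axis c 1) $ b - (x + 0 *s axis c 1) $ a))) = - (\<beta>$b / (x$a - x$b)) * pderiv_p c (pderiv_p a u) x
     + \<beta>$b * ((if a = c then 1 else 0) - (if b = c then 1 else 0)) / (x$a - x$b)^2 * pderiv_p a u x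
     - (\<beta>$a / (x$b - x$a)) * pderiv_p c (pderiv_p b u) x
     + \<beta>$a * ((if b = c then 1 else 0) - (if a = c then 1 else 0)) / (x$b - x$a)^2 * pderiv_p b u x"
    by (simp only: smult_zero_vec add_0_right) (rule alg1)
  note F' = DERIV_cong[OF F eqX]
  show "((\<lambda>t. Rf \<beta> u a b (x + t *s axis c 1)) has_field_derivative
     - (\<beta>$b / (x$a - x$b)) * pderiv_p c (pderiv_p a u) x
     + \<beta>$b * ((if a = c then 1 else 0) - (if b = c then 1 else 0)) / (x$a - x$b)^2 * pderiv_p a u x
     - (\<beta>$a / (x$b - x$a)) * pderiv_p c (pderiv_p b u) x
     + \<beta>$a * ((if b = c then 1 else 0) - (if a = c then 1 else 0)) / (x$b - x$a)^2 * pderiv_p b u x) (at 0)"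
    unfolding Rf_def by (fact F')
qed

lemma holo_Lop:
  assumes "holo_on u \<Omega>" "open \<Omega>"
  shows "holo_on (Lop i j \<beta> u) \<Omega>"
  unfolding holo_on_def
proof
  fix x assume x: "x \<in> \<Omega>"
  have hj: "holo_on (pderiv_p j u) \<Omega>" by (rule pderiv_holo[OF assms(2,1)])
  note d1 = holo_D(1)[OF assms(1) x]
  note d2 = holo_D(1)[OF hj x]
  have c: "((\<lambda>y. y$k) has_derivative (\<lambda>h. h$k)) (at x)" for k :: 'a
    by (rule bounded_linear_imp_has_derivative[OF bounded_linear_vec_nth])
  note M1 = has_derivative_mult[OF has_derivative_diff[OF c[of i] c[of j]] d2]
  note M2 = has_derivative_mult[OF has_derivative_const[of "\<beta>$j"] d1]
  note M = has_derivative_add[OF M1 M2]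
  have eq: "(\<lambda>y. (y$i - y$j) * pderiv_p j u y + \<beta>$j * u y) = Lop i j \<beta> u"
    by (auto simp: Lop_def fun_eq_iff)
  show "\<exists>D. (Lop i j \<beta> u has_derivative D) (at x) \<and> (\<forall>c v. D (c *s v) = c * D v)"
    using M unfolding eq
    by (intro exI conjI allI, assumption) (simp add: sum_distrib_left algebra_simps)
qed

lemma T_formula:
  assumes "open \<Omega>" "\<forall>y\<in>\<Omega>. \<forall>a b. a \<noteq> b \<longrightarrow> y$a \<noteq> y$b" "u \<in> Sol \<Omega> \<alpha>" "x \<in> \<Omega>" "p \<noteq> q"
  shows "pderiv_p p (pderiv_p q (pderiv_p j u)) x =
     (if q \<noteq> j then pderiv_p p (Rf \<alpha> u q j) x else pderiv_p j (Rf \<alpha> u p j) x)"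
proof -
  have hu: "holo_on u \<Omega>" using assms(3) unfolding Sol_def by blast
  show ?thesis
  proof (cases "q = j")
    case False
    have "pderiv_p p (pderiv_p q (pderiv_p j u)) x = pderiv_p p (Rf \<alpha> u q j) x"
      by (rule pd_local[OF assms(1,4)]) (rule Sol_rel[OF assms(3) False])
    then show ?thesis using False by simp
  next
    case True
    then have pj: "p \<noteq> j" using assms(5) by simp
    have "pderiv_p p (pderiv_p q (pderiv_p j u)) x = pderiv_p j (pderiv_p p (pderiv_p j u)) x"
      using True pderiv_sym[OF assms(1) pderiv_holo[OF assms(1) hu] assms(4)] by simp
    also have "\<dots> = pderiv_p j (Rf \<alpha> u p j) x"
      by (rule pd_local[OF assms(1,4)]) (rule Sol_rel[OF assms(3) pj])
    finally show ?thesis using True by simp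
  qed
qed

lemma Srel_poly:
  assumes "u \<in> Sol \<Omega> \<alpha>" "a \<noteq> b" "x \<in> \<Omega>" "x$a \<noteq> x$b"
  shows "pderiv_p a (pderiv_p b u) x * (x$a - x$b) = \<alpha>$a * pderiv_p b u x - \<alpha>$b * pderiv_p a u x"
proof -
  have d: "x$a - x$b \<noteq> 0" "x$b - x$a \<noteq> 0" using assms(4) by auto
  have ab: "\<And>d e bb ba A B S :: complex. d \<noteq> 0 \<Longrightarrow> e = -d \<Longrightarrow> S = - (bb / d) * A - (ba / e) * B \<Longrightarrow> S * d = ba * B - bb * A"
    by (simp add: field_simps)
  have S: "pderiv_p a (pderiv_p b u) x = - (\<alpha>$b / (x$a - x$b)) * pderiv_p a u x - (\<alpha>$a / (x$b - x$a)) * pderiv_p b u x"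
    using Sol_rel[OF assms(1-3)] unfolding Rf_def .
  show ?thesis by (rule ab[OF d(1) _ S]) simp
qed

lemma Rrel_poly:
  assumes "holo_on u \<Omega>" "open \<Omega>" "x \<in> \<Omega>" "x$a \<noteq> x$b"
  shows "pderiv_p c (Rf \<beta> u a b) x * (x$a - x$b)^2 =
     - \<beta>$b * (x$a - x$b) * pderiv_p c (pderiv_p a u) x
     + \<beta>$b * ((if a = c then 1 else 0) - (if b = c then 1 else 0)) * pderiv_p a u x
     + \<beta>$a * (x$a - x$b) * pderiv_p c (pderiv_p b u) x
     + \<beta>$a * ((if b = c then 1 else 0) - (if a = c then 1 else 0)) * pderiv_p b u x"
proof -
  have d: "x$a - x$b \<noteq> 0" "x$b - x$a \<noteq> 0" using assms(4) by auto
  have ab: "\<And>d e bb ba e1 e2 S1 S2 A B :: complex. d \<noteq> 0 \<Longrightarrow> e = -d \<Longrightarrow>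
     (- (bb / d) * S1 + bb * e1 / d^2 * A - ba / e * S2 + ba * e2 / e^2 * B) * d^2
       = - bb * d * S1 + bb * e1 * A + ba * d * S2 + ba * e2 * B"
    by (simp add: field_simps power2_eq_square)
  show ?thesis unfolding pd_R[OF assms] by (rule ab[OF d(1)]) simp
qed

lemma Mpoly:
  assumes "x$p \<noteq> x$q"
  shows "(x$p - x$q) * Mop p q \<beta> w x = (x$p - x$q) * pderiv_p p (pderiv_p q w) x
     + \<beta>$q * pderiv_p p w x - \<beta>$p * pderiv_p q w x"
proof -
  have d: "x$p - x$q \<noteq> 0" "x$q - x$p \<noteq> 0" using assms by auto
  have ab: "\<And>d e X bq bp P Q :: complex. d \<noteq> 0 \<Longrightarrow> e = -d \<Longrightarrow> d * (X + bq / d * P + bp / e * Q) = d * X + bq * P - bp * Q"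
    by (simp add: field_simps)
  show ?thesis unfolding Mop_def by (rule ab[OF d(1)]) simp
qed

lemma Mop_Lop_zero:
  assumes "open \<Omega>" "\<forall>y\<in>\<Omega>. \<forall>a b. a \<noteq> b \<longrightarrow> y$a \<noteq> y$b" "i \<noteq> j" "u \<in> Sol \<Omega> \<alpha>"
    and pq: "p \<noteq> q" and x: "x \<in> \<Omega>"
  shows "Mop p q (\<alpha> + axis i 1 - axis j 1) (Lop i j \<alpha> u) x = 0"
proof -
  have hu: "holo_on u \<Omega>" using assms(4) unfolding Sol_def by blast
  have nzx: "\<And>a b. a \<noteq> b \<Longrightarrow> x$a \<noteq> x$b" using assms(2) x by blast
  have Inv: "\<And>a b. a \<noteq> b \<Longrightarrow> (x$a - x$b) * inverse (x$a - x$b) = 1" using nzx by simp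
  have Srel: "\<And>a b. a \<noteq> b \<Longrightarrow> pderiv_p a (pderiv_p b u) x * (x$a - x$b) = \<alpha>$a * pderiv_p b u x - \<alpha>$b * pderiv_p a u x"
    using Srel_poly[OF assms(4) _ x] nzx by blast
  have Rrel: "\<And>c a b. a \<noteq> b \<Longrightarrow> pderiv_p c (Rf \<alpha> u a b) x * (x$a - x$b)^2 =
     - \<alpha>$b * (x$a - x$b) * pderiv_p c (pderiv_p a u) x
     + \<alpha>$b * ((if a = c then 1 else 0) - (if b = c then 1 else 0)) * pderiv_p a u x
     + \<alpha>$a * (x$a - x$b) * pderiv_p c (pderiv_p b u) x
     + \<alpha>$a * ((if b = c then 1 else 0) - (if a = c then 1 else 0)) * pderiv_p b u x"
    using Rrel_poly[OF hu assms(1) x] nzx by blast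
  have T: "pderiv_p p (pderiv_p q (pderiv_p j u)) x =
     (if q \<noteq> j then pderiv_p p (Rf \<alpha> u q j) x else pderiv_p j (Rf \<alpha> u p j) x)"
    by (rule T_formula[OF assms(1,2,4) x pq])
  note L1 = pd_Lop[OF hu assms(1) x]
  note L2 = pd_DqLop[OF hu assms(1) x]
  have a': "(\<alpha> + axis i 1 - axis j 1)$k = \<alpha>$k + (if i = k then 1 else 0) - (if j = k then 1 else 0)" for k
    by (auto simp: axis_def)
  note M = Mpoly[OF nzx[OF pq], of "\<alpha> + axis i 1 - axis j 1" "Lop i j \<alpha> u"]
  note ij = assms(3) not_sym[OF assms(3)]
  have "(x$p - x$q) * Mop p q (\<alpha> + axis i 1 - axis j 1) (Lop i j \<alpha> u) x = 0"
  proof (cases "q = j")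
    case False
    note qj = False not_sym[OF False]
    show ?thesis
    proof (cases "p = i")
      case True
      have qi: "q \<noteq> i" "i \<noteq> q" using True pq by auto
      show ?thesis using Srel[of q j] Srel[of i q] Srel[of i j] Rrel[of q j i] Inv[of q j] Inv[of i q] Inv[of i j] qj qi ij
        unfolding M L1 L2 T a' unfolding True by (simp only: if_True if_False simp_thms qj qi ij) algebra
    next
      case pi: False
      show ?thesis
      proof (cases "p = j")
        case True
        show ?thesis
        proof (cases "q = i")
          case qi: True
          show ?thesis using Srel[of i j] Srel[of j i] Rrel[of i j j] Inv[of i j] ij
            unfolding M L1 L2 T a' unfolding True qi by (simp only: if_True if_False simp_thms ij) algebra
        next
          case qi: False
          note qi = qi not_sym[OF qi]
          show ?thesis using Srel[of q j] Srel[of j q] Rrel[of q j j] Inv[of q j] qj qi ij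
            unfolding M L1 L2 T a' unfolding True by (simp only: if_True if_False simp_thms qj qi ij) algebra
        qed
      next
        case pj: False
        note pi = pi not_sym[OF pi]
        note pj = pj not_sym[OF pj]
        show ?thesis
        proof (cases "q = i")
          case qi: True
          show ?thesis using Srel[of i j] Srel[of p i] Srel[of p j] Rrel[of i j p] Inv[of i j] Inv[of p i] Inv[of p j] pi pj ij
            unfolding M L1 L2 T a' unfolding qi by (simp only: if_True if_False simp_thms pi pj ij) algebra
        next
          case qi: False
          note qi = qi not_sym[OF qi]
          show ?thesis using Srel[of q j] Srel[of p q] Srel[of p j] Rrel[of q j p] Inv[of q j] Inv[of p q] Inv[of p j] pi pj qi qj ij pq not_sym[OF pq]
            unfolding M L1 L2 T a' by (simp only: if_True if_False simp_thms pi pj qi qj ij pq not_sym[OF pq]) algebra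
        qed
      qed
    qed
  next
    case True
    have pj: "p \<noteq> j" "j \<noteq> p" using True pq by auto
    show ?thesis
    proof (cases "p = i")
      case pi: True
      show ?thesis using Srel[of j i] Srel[of i j] Rrel[of i j j] Inv[of i j] ij
        unfolding M L1 L2 T a' unfolding True pi by (simp only: if_True if_False simp_thms ij) algebra
    next
      case pi: False
      note pi = pi not_sym[OF pi]
      show ?thesis using Srel[of j p] Srel[of p j] Rrel[of p j j] Inv[of p j] pi pj ij
        unfolding M L1 L2 T a' unfolding True by (simp only: if_True if_False simp_thms pi pj ij) algebra
    qed
  qed
  then show ?thesis using nzx[OF pq] by simp
qed

lemma Lop_Sol:
  assumes "open \<Omega>" "\<forall>y\<in>\<Omega>. \<forall>a b. a \<noteq> b \<longrightarrow> y$a \<noteq> y$b" "i \<noteq> j" "u \<in> Sol \<Omega> \<alpha>"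
  shows "Lop i j \<alpha> u \<in> Sol \<Omega> (\<alpha> + axis i 1 - axis j 1)"
proof -
  have hu: "holo_on u \<Omega>" using assms(4) unfolding Sol_def by blast
  have "Mop p q (\<alpha> + axis i 1 - axis j 1) (Lop i j \<alpha> u) x = 0" if pq: "p \<noteq> q" and x: "x \<in> \<Omega>" for p q x
    by (rule Mop_Lop_zero[OF assms pq x])
  then show ?thesis using holo_Lop[OF hu assms(1)] unfolding Sol_def
    by (simp add: mem_Collect_eq)
qed

lemma pd_scale:
  assumes "holo_on f \<Omega>" "x \<in> \<Omega>"
  shows "pderiv_p p (\<lambda>y. c * f y) x = c * pderiv_p p f x"
  by (rule pd_eq) (rule DERIV_cmult[OF holo_D(2)[OF assms]])

lemma holo_scale:
  assumes "holo_on f \<Omega>"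
  shows "holo_on (\<lambda>y. c * f y) \<Omega>"
  unfolding holo_on_def
proof
  fix x assume x: "x \<in> \<Omega>"
  obtain D where D: "(f has_derivative D) (at x)" "\<And>c v. D (c *s v) = c * D v"
    using assms x unfolding holo_on_def by blast
  have "((\<lambda>y. c * f y) has_derivative (\<lambda>h. c * D h)) (at x)"
    using has_derivative_mult[OF has_derivative_const[of c] D(1)] by simp
  moreover have "\<forall>a v. c * D (a *s v) = a * (c * D v)" using D(2) by (simp add: algebra_simps)
  ultimately show "\<exists>D. ((\<lambda>y. c * f y) has_derivative D) (at x) \<and> (\<forall>a v. D (a *s v) = a * D v)"
    by blast
qed

lemma Sol_scale:
  assumes "open \<Omega>" "w \<in> Sol \<Omega> \<beta>"
  shows "(\<lambda>y. c * w y) \<in> Sol \<Omega> \<beta>"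
proof -
  have hw: "holo_on w \<Omega>" using assms(2) unfolding Sol_def by blast
  have "Mop p q \<beta> (\<lambda>y. c * w y) x = 0" if pq: "p \<noteq> q" and x: "x \<in> \<Omega>" for p q x
  proof -
    have M0: "Mop p q \<beta> w x = 0" using assms(2) pq x unfolding Sol_def by blast
    have hq: "holo_on (pderiv_p q w) \<Omega>" by (rule pderiv_holo[OF assms(1) hw])
    have "pderiv_p p (pderiv_p q (\<lambda>y. c * w y)) x = pderiv_p p (\<lambda>y. c * pderiv_p q w y) x"
      by (rule pd_local[OF assms(1) x]) (rule pd_scale[OF hw])
    also have "\<dots> = c * pderiv_p p (pderiv_p q w) x" by (rule pd_scale[OF hq x])
    finally have e: "pderiv_p p (pderiv_p q (\<lambda>y. c * w y)) x = c * pderiv_p p (pderiv_p q w) x" .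
    have "Mop p q \<beta> (\<lambda>y. c * w y) x = c * Mop p q \<beta> w x"
      unfolding Mop_def e pd_scale[OF hw x] by (simp add: algebra_simps)
    then show ?thesis using M0 by simp
  qed
  then show ?thesis using holo_scale[OF hw] unfolding Sol_def by (simp add: mem_Collect_eq)
qed

lemma inv_left:
  assumes "open \<Omega>" "\<forall>y\<in>\<Omega>. \<forall>a b. a \<noteq> b \<longrightarrow> y$a \<noteq> y$b" "i \<noteq> j" "u \<in> Sol \<Omega> \<alpha>" "x \<in> \<Omega>"
  shows "Lop j i (\<alpha> + axis i 1 - axis j 1) (Lop i j \<alpha> u) x = ((\<alpha>$i + 1) * \<alpha>$j) * u x"
proof -
  have hu: "holo_on u \<Omega>" using assms(4) unfolding Sol_def by blast
  have xij: "x$i \<noteq> x$j" using assms(2,3,5) by blast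
  have e1: "Lop j i (\<alpha> + axis i 1 - axis j 1) (Lop i j \<alpha> u) x =
      (x$j - x$i) * pderiv_p i (Lop i j \<alpha> u) x + (\<alpha>$i + 1) * Lop i j \<alpha> u x"
    unfolding Lop_def[of j i] using assms(3) by (simp add: axis_def)
  have e2: "pderiv_p i (Lop i j \<alpha> u) x = pderiv_p j u x + (x$i - x$j) * pderiv_p i (pderiv_p j u) x + \<alpha>$j * pderiv_p i u x"
    using pd_Lop[OF hu assms(1,5), of i i j \<alpha>] assms(3) by simp
  have e3: "Lop i j \<alpha> u x = (x$i - x$j) * pderiv_p j u x + \<alpha>$j * u x" unfolding Lop_def ..
  have e4: "pderiv_p i (pderiv_p j u) x * (x$i - x$j) = \<alpha>$i * pderiv_p j u x - \<alpha>$j * pderiv_p i u x"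
    by (rule Srel_poly[OF assms(4,3,5) xij])
  show ?thesis unfolding e1 e2 e3 using e4 by algebra
qed

lemma inv_right:
  assumes "open \<Omega>" "\<forall>y\<in>\<Omega>. \<forall>a b. a \<noteq> b \<longrightarrow> y$a \<noteq> y$b" "i \<noteq> j"
    "v \<in> Sol \<Omega> (\<alpha> + axis i 1 - axis j 1)" "x \<in> \<Omega>"
  shows "Lop i j \<alpha> (\<lambda>y. c * Lop j i (\<alpha> + axis i 1 - axis j 1) v y) x = c * (((\<alpha>$i + 1) * \<alpha>$j) * v x)"
proof -
  define \<alpha>' where "\<alpha>' = \<alpha> + axis i 1 - axis j 1"
  have a'i: "\<alpha>'$i = \<alpha>$i + 1" and a'j: "\<alpha>'$j = \<alpha>$j - 1" using assms(3) by (auto simp: \<alpha>'_def axis_def)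
  have hv: "holo_on v \<Omega>" using assms(4) unfolding Sol_def by blast
  have hL: "holo_on (Lop j i \<alpha>' v) \<Omega>" by (rule holo_Lop[OF hv assms(1)])
  have xji: "x$j \<noteq> x$i" using assms(2,5) not_sym[OF assms(3)] by blast
  have e1: "Lop i j \<alpha> (\<lambda>y. c * Lop j i \<alpha>' v y) x =
     (x$i - x$j) * (c * pderiv_p j (Lop j i \<alpha>' v) x) + \<alpha>$j * (c * Lop j i \<alpha>' v x)"
    unfolding Lop_def[of i j] pd_scale[OF hL assms(5)] ..
  have e2: "pderiv_p j (Lop j i \<alpha>' v) x = pderiv_p i v x + (x$j - x$i) * pderiv_p j (pderiv_p i v) x + \<alpha>'$i * pderiv_p j v x"
    using pd_Lop[OF hv assms(1,5), of j j i \<alpha>'] assms(3) by simp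
  have e3: "Lop j i \<alpha>' v x = (x$j - x$i) * pderiv_p i v x + \<alpha>'$i * v x" unfolding Lop_def ..
  have e4: "pderiv_p j (pderiv_p i v) x * (x$j - x$i) = \<alpha>'$j * pderiv_p i v x - \<alpha>'$i * pderiv_p j v x"
    by (rule Srel_poly[OF assms(4)[folded \<alpha>'_def] not_sym[OF assms(3)] assms(5) xji])
  show ?thesis unfolding \<alpha>'_def[symmetric] e1 e2 e3 using e4 a'i a'j by algebra
qed

theorem mainTheorem2:
  fixes \<Omega> :: "(complex^'n) set" and \<alpha> :: "complex^'n" and i j :: 'n
  assumes "CARD('n) \<ge> 3"
    and "open \<Omega>" and "connected \<Omega>" and "simply_connected \<Omega>"
    and "\<Omega> \<subseteq> {x. \<forall>a b. a \<noteq> b \<longrightarrow> x $ a \<noteq> x $ b}"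
    and "i \<noteq> j"
  shows "(\<forall>u \<in> Sol \<Omega> \<alpha>. Lop i j \<alpha> u \<in> Sol \<Omega> (\<alpha> + axis i 1 - axis j 1))
    \<and> ((\<alpha> $ i + 1) * \<alpha> $ j \<noteq> 0 \<longrightarrow>
        (let \<alpha>' = \<alpha> + axis i 1 - axis j 1;
             Inv = (\<lambda>v x. 1 / ((\<alpha> $ i + 1) * \<alpha> $ j) * Lop j i \<alpha>' v x)
         in (\<forall>v \<in> Sol \<Omega> \<alpha>'. Inv v \<in> Sol \<Omega> \<alpha>)
          \<and> (\<forall>u \<in> Sol \<Omega> \<alpha>. \<forall>x\<in>\<Omega>. Inv (Lop i j \<alpha> u) x = u x)
          \<and> (\<forall>v \<in> Sol \<Omega> \<alpha>'. \<forall>x\<in>\<Omega>. Lop i j \<alpha> (Inv v) x = v x)))"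
proof -
  have dist: "\<forall>y\<in>\<Omega>. \<forall>a b. a \<noteq> b \<longrightarrow> y$a \<noteq> y$b" using assms(5) by blast
  have P1: "\<forall>u \<in> Sol \<Omega> \<alpha>. Lop i j \<alpha> u \<in> Sol \<Omega> (\<alpha> + axis i 1 - axis j 1)"
    using Lop_Sol[OF assms(2) dist assms(6)] by blast
  have P2: "(\<alpha> $ i + 1) * \<alpha> $ j \<noteq> 0 \<longrightarrow>
        (let \<alpha>' = \<alpha> + axis i 1 - axis j 1;
             Inv = (\<lambda>v x. 1 / ((\<alpha> $ i + 1) * \<alpha> $ j) * Lop j i \<alpha>' v x)
         in (\<forall>v \<in> Sol \<Omega> \<alpha>'. Inv v \<in> Sol \<Omega> \<alpha>)
          \<and> (\<forall>u \<in> Sol \<Omega> \<alpha>. \<forall>x\<in>\<Omega>. Inv (Lop i j \<alpha> u) x = u x)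
          \<and> (\<forall>v \<in> Sol \<Omega> \<alpha>'. \<forall>x\<in>\<Omega>. Lop i j \<alpha> (Inv v) x = v x))"
  proof
    assume K: "(\<alpha> $ i + 1) * \<alpha> $ j \<noteq> 0"
    show "let \<alpha>' = \<alpha> + axis i 1 - axis j 1;
             Inv = (\<lambda>v x. 1 / ((\<alpha> $ i + 1) * \<alpha> $ j) * Lop j i \<alpha>' v x)
         in (\<forall>v \<in> Sol \<Omega> \<alpha>'. Inv v \<in> Sol \<Omega> \<alpha>)
          \<and> (\<forall>u \<in> Sol \<Omega> \<alpha>. \<forall>x\<in>\<Omega>. Inv (Lop i j \<alpha> u) x = u x)
          \<and> (\<forall>v \<in> Sol \<Omega> \<alpha>'. \<forall>x\<in>\<Omega>. Lop i j \<alpha> (Inv v) x = v x)"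
      unfolding Let_def
    proof (intro conjI ballI)
      fix v assume v: "v \<in> Sol \<Omega> (\<alpha> + axis i 1 - axis j 1)"
      have "Lop j i (\<alpha> + axis i 1 - axis j 1) v \<in> Sol \<Omega> (\<alpha> + axis i 1 - axis j 1 + axis j 1 - axis i 1)"
        by (rule Lop_Sol[OF assms(2) dist not_sym[OF assms(6)] v])
      moreover have "\<alpha> + axis i 1 - axis j 1 + axis j 1 - axis i 1 = \<alpha>" by (simp add: algebra_simps)
      ultimately have "Lop j i (\<alpha> + axis i 1 - axis j 1) v \<in> Sol \<Omega> \<alpha>" by simp
      then show "(\<lambda>x. 1 / ((\<alpha> $ i + 1) * \<alpha> $ j) * Lop j i (\<alpha> + axis i 1 - axis j 1) v x) \<in> Sol \<Omega> \<alpha>"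
        by (rule Sol_scale[OF assms(2)])
    next
      fix u x assume u: "u \<in> Sol \<Omega> \<alpha>" and x: "x \<in> \<Omega>"
      show "1 / ((\<alpha> $ i + 1) * \<alpha> $ j) * Lop j i (\<alpha> + axis i 1 - axis j 1) (Lop i j \<alpha> u) x = u x"
        unfolding inv_left[OF assms(2) dist assms(6) u x] using K by simp
    next
      fix v x assume v: "v \<in> Sol \<Omega> (\<alpha> + axis i 1 - axis j 1)" and x: "x \<in> \<Omega>"
      show "Lop i j \<alpha> (\<lambda>x. 1 / ((\<alpha> $ i + 1) * \<alpha> $ j) * Lop j i (\<alpha> + axis i 1 - axis j 1) v x) x = v x"
        unfolding inv_right[OF assms(2) dist assms(6) v x] using K by simp
    qed
  qed
  from P1 P2 show ?thesis by blast
qed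

end
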